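(* Let $\lambda\in(0,\tfrac12)$ and let $G$ be a finite simple connected graph with $n$ vertices. Then $$mc^{e}_{\lambda}(G)\le (n-1)\lambda,$$ and equality holds for the complete graph $K_n$ (at any of its vertices).
   Context: $d(u,v)$ denotes graph distance and $[u]$ the set of neighbours of $u$. For vertices $k,l$, $s^{kl}$ is the number of shortest $k$–$l$ paths and, for an edge $uv$, $s^{kl}_{uv}$ is the number of those passing through the edge $uv$. The exponential edge betweenness of an edge $uv$ is $b^{e}_{\lambda}(uv)=\sum_{\{k,l\}}\frac{s^{kl}_{uv}}{s^{kl}}\lambda^{d(k,l)}$ over all unordered pairs $\{k,l\}$ of distinct vertices; the exponential betweenness centrality of a vertex $u$ is $c^{e}_{\lambda}(u)=\sum_{v\in[u]}b^{e}_{\lambda}(uv)$; and $mc^{e}_{\lambda}(G)=\min\{c^{e}_{\lambda}(u):u\in V(G)\}$. *)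

theory Defs
  imports Complex_Main
begin

definition simple_graph :: "'a set \<Rightarrow> ('a \<Rightarrow> 'a \<Rightarrow> bool) \<Rightarrow> bool" where
  "simple_graph V E \<longleftrightarrow> finite V \<and> (\<forall>u v. E u v \<longrightarrow> u \<in> V \<and> v \<in> V)
     \<and> (\<forall>u v. E u v \<longrightarrow> E v u) \<and> (\<forall>u. \<not> E u u)"

definition walk :: "'a set \<Rightarrow> ('a \<Rightarrow> 'a \<Rightarrow> bool) \<Rightarrow> 'a list \<Rightarrow> bool" where
  "walk V E xs \<longleftrightarrow> xs \<noteq> [] \<and> set xs \<subseteq> V \<and>
     (\<forall>i. Suc i < length xs \<longrightarrow> E (xs ! i) (xs ! Suc i))"

definition connected_graph :: "'a set \<Rightarrow> ('a \<Rightarrow> 'a \<Rightarrow> bool) \<Rightarrow> bool" where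
  "connected_graph V E \<longleftrightarrow> V \<noteq> {} \<and>
     (\<forall>k\<in>V. \<forall>l\<in>V. \<exists>xs. walk V E xs \<and> hd xs = k \<and> last xs = l)"

definition gdist :: "'a set \<Rightarrow> ('a \<Rightarrow> 'a \<Rightarrow> bool) \<Rightarrow> 'a \<Rightarrow> 'a \<Rightarrow> nat" where
  "gdist V E k l = (LEAST n. \<exists>xs. walk V E xs \<and> hd xs = k \<and> last xs = l \<and> length xs = Suc n)"

definition shortest_paths :: "'a set \<Rightarrow> ('a \<Rightarrow> 'a \<Rightarrow> bool) \<Rightarrow> 'a \<Rightarrow> 'a \<Rightarrow> 'a list set" where
  "shortest_paths V E k l = {xs. walk V E xs \<and> hd xs = k \<and> last xs = l
       \<and> length xs = Suc (gdist V E k l)}"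

definition uses_edge :: "'a \<Rightarrow> 'a \<Rightarrow> 'a list \<Rightarrow> bool" where
  "uses_edge u v xs \<longleftrightarrow> (\<exists>i. Suc i < length xs \<and> {xs ! i, xs ! Suc i} = {u, v})"

definition num_sp :: "'a set \<Rightarrow> ('a \<Rightarrow> 'a \<Rightarrow> bool) \<Rightarrow> 'a \<Rightarrow> 'a \<Rightarrow> nat" where
  "num_sp V E k l = card (shortest_paths V E k l)"

definition num_sp_edge :: "'a set \<Rightarrow> ('a \<Rightarrow> 'a \<Rightarrow> bool) \<Rightarrow> 'a \<Rightarrow> 'a \<Rightarrow> 'a \<Rightarrow> 'a \<Rightarrow> nat" where
  "num_sp_edge V E k l u v = card {xs \<in> shortest_paths V E k l. uses_edge u v xs}"

text \<open>Exponential edge betweenness; the sum over unordered pairs {k,l} of distinct vertices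
  is written as half the (symmetric) sum over ordered pairs.\<close>
definition exp_edge_betweenness :: "'a set \<Rightarrow> ('a \<Rightarrow> 'a \<Rightarrow> bool) \<Rightarrow> real \<Rightarrow> 'a \<Rightarrow> 'a \<Rightarrow> real" where
  "exp_edge_betweenness V E lam u v =
     (1/2) * (\<Sum>(k,l)\<in>{(k,l). k \<in> V \<and> l \<in> V \<and> k \<noteq> l}.
        real (num_sp_edge V E k l u v) / real (num_sp V E k l) * lam ^ gdist V E k l)"

definition exp_betweenness :: "'a set \<Rightarrow> ('a \<Rightarrow> 'a \<Rightarrow> bool) \<Rightarrow> real \<Rightarrow> 'a \<Rightarrow> real" where
  "exp_betweenness V E lam u = (\<Sum>v\<in>{v\<in>V. E u v}. exp_edge_betweenness V E lam u v)"

definition min_exp_betweenness :: "'a set \<Rightarrow> ('a \<Rightarrow> 'a \<Rightarrow> bool) \<Rightarrow> real \<Rightarrow> real" where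
  "min_exp_betweenness V E lam = Min (exp_betweenness V E lam ` V)"

end

theory Submission imports Defs begin

lemma card_filter_sum: "finite A \<Longrightarrow> card {x\<in>A. P x} = (\<Sum>x\<in>A. if P x then 1 else (0::nat))"
  by (simp add: sum.inter_filter[symmetric])

lemma finite_sp: "finite V \<Longrightarrow> finite (shortest_paths V E k l)"
proof -
  assume f: "finite V"
  have "shortest_paths V E k l \<subseteq> {xs. set xs \<subseteq> V \<and> length xs = Suc (gdist V E k l)}"
    by (auto simp: shortest_paths_def walk_def)
  then show ?thesis using finite_lists_length_eq[OF f] finite_subset by blast
qed

lemma uses_card:
  assumes "p \<in> shortest_paths V E k l" "finite A"
  shows "card {x\<in>A. uses_edge (fst x) (snd x) p} \<le> 2 * gdist V E k l"
proof -
  let ?d = "gdist V E k l"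
  have len: "length p = Suc ?d" using assms by (simp add: shortest_paths_def)
  let ?f = "\<lambda>(i::nat, b::bool). if b then (p!i, p!Suc i) else (p!Suc i, p!i)"
  have "{x\<in>A. uses_edge (fst x) (snd x) p} \<subseteq> ?f ` ({..<?d} \<times> UNIV)"
  proof
    fix x assume "x \<in> {x\<in>A. uses_edge (fst x) (snd x) p}"
    then obtain i where i: "Suc i < length p" "{p!i, p!Suc i} = {fst x, snd x}"
      by (auto simp: uses_edge_def)
    then have "x = (p!i, p!Suc i) \<or> x = (p!Suc i, p!i)"
      by (cases x) (auto simp: doubleton_eq_iff)
    then show "x \<in> ?f ` ({..<?d} \<times> UNIV)" using i len
      by (auto simp: image_iff intro!: bexI[of _ "(i, True)"] bexI[of _ "(i, False)"])
  qed
  then have "card {x\<in>A. uses_edge (fst x) (snd x) p} \<le> card (?f ` ({..<?d} \<times> UNIV))"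
    by (intro card_mono) auto
  also have "\<dots> \<le> card ({..<?d} \<times> (UNIV::bool set))" by (rule card_image_le) auto
  also have "\<dots> = 2 * ?d" by (simp add: card_cartesian_product)
  finally show ?thesis .
qed

lemma pow_bound:
  fixes lam :: real
  assumes "0 < lam" "lam < 1/2"
  shows "real d * lam ^ d \<le> lam"
proof (cases d)
  case 0 then show ?thesis using assms by simp
next
  case (Suc m)
  have "real (Suc m) \<le> 2 ^ m" by (induction m) auto
  have "lam ^ m \<le> (1/2)^m" using assms by (intro power_mono) auto
  have "real (Suc m) * lam ^ m \<le> 2^m * (1/2)^m"
    using \<open>real (Suc m) \<le> 2 ^ m\<close> \<open>lam ^ m \<le> (1/2)^m\<close> assms
    by (intro mult_mono) auto
  also have "\<dots> = 1" by (simp add: power_mult_distrib[symmetric])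
  finally have "real (Suc m) * lam ^ m \<le> 1" .
  then have "real (Suc m) * lam ^ m * lam \<le> lam" using assms by simp
  then show ?thesis using Suc by (simp add: algebra_simps)
qed

lemma pair_bound:
  assumes fin: "finite V" and lam: "0 < lam" "lam < 1/2"
  shows "(\<Sum>u\<in>V. \<Sum>v\<in>{v\<in>V. E u v}. real (num_sp_edge V E k l u v) / real (num_sp V E k l)
            * lam ^ gdist V E k l) \<le> 2 * lam"
proof -
  let ?S = "shortest_paths V E k l" and ?d = "gdist V E k l" and ?N = "num_sp V E k l"
  let ?A = "Sigma V (\<lambda>u. {v\<in>V. E u v})"
  have finS: "finite ?S" using finite_sp[OF fin] .
  have finA: "finite ?A" using fin by auto
  define T where "T = (\<Sum>u\<in>V. \<Sum>v\<in>{v\<in>V. E u v}. num_sp_edge V E k l u v)"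
  have "T = (\<Sum>x\<in>?A. num_sp_edge V E k l (fst x) (snd x))"
    unfolding T_def using fin by (subst sum.Sigma) (auto simp: case_prod_beta)
  also have "\<dots> = (\<Sum>x\<in>?A. \<Sum>p\<in>?S. if uses_edge (fst x) (snd x) p then 1 else 0)"
    unfolding num_sp_edge_def using finS by (simp add: card_filter_sum)
  also have "\<dots> = (\<Sum>p\<in>?S. \<Sum>x\<in>?A. if uses_edge (fst x) (snd x) p then 1 else 0)"
    by (rule sum.swap)
  also have "\<dots> = (\<Sum>p\<in>?S. card {x\<in>?A. uses_edge (fst x) (snd x) p})"
    using finA by (simp add: card_filter_sum)
  also have "\<dots> \<le> (\<Sum>p\<in>?S. 2 * ?d)"
    by (rule sum_mono) (rule uses_card[OF _ finA])
  also have "\<dots> = 2 * ?d * ?N" by (simp add: num_sp_def)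
  finally have T: "T \<le> 2 * ?d * ?N" .
  have "(\<Sum>u\<in>V. \<Sum>v\<in>{v\<in>V. E u v}. real (num_sp_edge V E k l u v) / real ?N * lam ^ ?d)
     = real T / real ?N * lam ^ ?d"
    unfolding T_def by (simp add: sum_divide_distrib sum_distrib_right)
  also have "\<dots> \<le> 2 * lam"
  proof (cases "?N = 0")
    case True then show ?thesis using lam by simp
  next
    case False
    have "real T / real ?N \<le> 2 * real ?d"
      using T False by (simp add: divide_le_eq) (metis of_nat_le_iff of_nat_mult of_nat_numeral)
    then have "real T / real ?N * lam ^ ?d \<le> 2 * real ?d * lam ^ ?d"
      using lam by (intro mult_right_mono) auto
    also have "\<dots> \<le> 2 * lam" using pow_bound[OF lam, of ?d] by simp
    finally show ?thesis .
  qed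
  finally show ?thesis .
qed


lemma sum_bound:
  assumes fin: "finite V" and lam: "0 < lam" "lam < 1/2"
  shows "(\<Sum>u\<in>V. exp_betweenness V E lam u) \<le> real (card V) * (real (card V) - 1) * lam"
proof -
  let ?P = "{(k,l). k \<in> V \<and> l \<in> V \<and> k \<noteq> l}"
  let ?f = "\<lambda>k l u v. real (num_sp_edge V E k l u v) / real (num_sp V E k l) * lam ^ gdist V E k l"
  have P: "?P = Sigma V (\<lambda>k. V - {k})" by auto
  have finP: "finite ?P" unfolding P using fin by auto
  have cardP: "card ?P = card V * (card V - 1)"
    unfolding P using fin by (simp add: card_SigmaI)
  have "(\<Sum>u\<in>V. exp_betweenness V E lam u)
     = (\<Sum>u\<in>V. \<Sum>v\<in>{v\<in>V. E u v}. (1/2) * (\<Sum>(k,l)\<in>?P. ?f k l u v))"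
    by (simp add: exp_betweenness_def exp_edge_betweenness_def)
  also have "\<dots> = (1/2) * (\<Sum>(k,l)\<in>?P. \<Sum>u\<in>V. \<Sum>v\<in>{v\<in>V. E u v}. ?f k l u v)"
    by (simp add: sum_distrib_left case_prod_beta sum.swap[of _ "{v\<in>V. E _ v}"] sum.swap[of _ V])
  also have "\<dots> \<le> (1/2) * (\<Sum>(k,l)\<in>?P. 2 * lam)"
    using pair_bound[OF fin lam] by (intro mult_left_mono sum_mono) (auto simp del: times_divide_eq_left times_divide_eq_right)
  also have "\<dots> = real (card ?P) * lam" by simp
  also have "\<dots> = real (card V) * (real (card V) - 1) * lam"
    using cardP by (cases "card V") (auto simp: algebra_simps)
  finally show ?thesis .
qed


context
  fixes V :: "'a set" and E
  assumes K: "\<forall>u v. E u v \<longleftrightarrow> u \<in> V \<and> v \<in> V \<and> u \<noteq> v"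
begin

lemma K_walk: "k \<in> V \<Longrightarrow> l \<in> V \<Longrightarrow> k \<noteq> l \<Longrightarrow> walk V E [k,l]"
  using K by (auto simp: walk_def less_Suc_eq)

lemma K_gdist: assumes "k \<in> V" "l \<in> V" "k \<noteq> l" shows "gdist V E k l = 1"
  unfolding gdist_def
proof (rule Least_equality)
  show "\<exists>xs. walk V E xs \<and> hd xs = k \<and> last xs = l \<and> length xs = Suc 1"
    using K_walk[OF assms] by (intro exI[of _ "[k,l]"]) auto
next
  fix n assume "\<exists>xs. walk V E xs \<and> hd xs = k \<and> last xs = l \<and> length xs = Suc n"
  then obtain xs where "hd xs = k" "last xs = l" "length xs = Suc n" by blast
  then show "1 \<le> n" using assms(3) by (cases xs) (auto split: if_splits simp: Suc_le_eq)
qed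

lemma K_sp: assumes "k \<in> V" "l \<in> V" "k \<noteq> l" shows "shortest_paths V E k l = {[k,l]}"
proof -
  have "xs = [k,l]" if "hd xs = k" "last xs = l" "length xs = 2" for xs :: "'a list"
    using that by (cases xs; cases "tl xs") auto
  then show ?thesis using K_walk[OF assms] K_gdist[OF assms]
    unfolding shortest_paths_def by (auto simp: numeral_2_eq_2)
qed

lemma K_eb: assumes finV: "finite V" and "u \<in> V" "v \<in> V" "u \<noteq> v" shows "exp_edge_betweenness V E lam u v = lam"
proof -
  let ?P = "{(k,l). k \<in> V \<and> l \<in> V \<and> k \<noteq> l}"
  have fin: "finite ?P" by (rule finite_subset[of _ "V \<times> V"]) (use finV in auto)
  have trm: "real (num_sp_edge V E k l u v) / real (num_sp V E k l) * lam ^ gdist V E k l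
      = (if (k,l) \<in> {(u,v),(v,u)} then lam else 0)" if "(k,l) \<in> ?P" for k l
  proof -
    from that have kl: "k \<in> V" "l \<in> V" "k \<noteq> l" by auto
    have "uses_edge u v [k,l] \<longleftrightarrow> (k,l) \<in> {(u,v),(v,u)}"
      by (auto simp: uses_edge_def doubleton_eq_iff less_Suc_eq)
    then show ?thesis using K_sp[OF kl] K_gdist[OF kl]
      by (auto simp: num_sp_def num_sp_edge_def Collect_conv_if)
  qed
  have "exp_edge_betweenness V E lam u v = (1/2) * (\<Sum>x\<in>?P. if x \<in> {(u,v),(v,u)} then lam else 0)"
    unfolding exp_edge_betweenness_def using trm by (auto intro!: sum.cong)
  also have "\<dots> = (1/2) * (\<Sum>x\<in>?P \<inter> {(u,v),(v,u)}. lam)"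
    using sum.inter_restrict[OF fin, of "\<lambda>_. lam" "{(u,v),(v,u)}"] by (simp add: if_distrib)
  also have "?P \<inter> {(u,v),(v,u)} = {(u,v),(v,u)}" using assms by auto
  finally show ?thesis using assms(4) by simp
qed

end

theorem theorem7:
  fixes V :: "'a set" and E :: "'a \<Rightarrow> 'a \<Rightarrow> bool" and lam :: real
  assumes "0 < lam" and "lam < 1/2"
    and "simple_graph V E" and "connected_graph V E"
  shows "min_exp_betweenness V E lam \<le> (real (card V) - 1) * lam
    \<and> ((\<forall>u v. E u v \<longleftrightarrow> u \<in> V \<and> v \<in> V \<and> u \<noteq> v) \<longrightarrow>
         min_exp_betweenness V E lam = (real (card V) - 1) * lam
         \<and> (\<forall>u\<in>V. exp_betweenness V E lam u = (real (card V) - 1) * lam))"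
proof
  have fin: "finite V" using assms(3) by (simp add: simple_graph_def)
  have ne: "V \<noteq> {}" using assms(4) by (simp add: connected_graph_def)
  have npos: "0 < card V" using fin ne by (simp add: card_gt_0_iff)
  let ?m = "min_exp_betweenness V E lam"
  have "?m \<le> exp_betweenness V E lam u" if "u \<in> V" for u
    unfolding min_exp_betweenness_def using fin that by (intro Min_le) auto
  then have "(\<Sum>u\<in>V. ?m) \<le> (\<Sum>u\<in>V. exp_betweenness V E lam u)" by (rule sum_mono)
  also have "\<dots> \<le> real (card V) * (real (card V) - 1) * lam"
    by (rule sum_bound[OF fin assms(1,2)])
  finally have "real (card V) * ?m \<le> real (card V) * ((real (card V) - 1) * lam)" by simp
  then show "?m \<le> (real (card V) - 1) * lam" using npos by simp
  show "(\<forall>u v. E u v \<longleftrightarrow> u \<in> V \<and> v \<in> V \<and> u \<noteq> v) \<longrightarrow>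
         ?m = (real (card V) - 1) * lam
         \<and> (\<forall>u\<in>V. exp_betweenness V E lam u = (real (card V) - 1) * lam)"
  proof
    assume K: "\<forall>u v. E u v \<longleftrightarrow> u \<in> V \<and> v \<in> V \<and> u \<noteq> v"
    have all: "exp_betweenness V E lam u = (real (card V) - 1) * lam" if u: "u \<in> V" for u
    proof -
      have "exp_betweenness V E lam u = (\<Sum>v\<in>V - {u}. lam)"
        unfolding exp_betweenness_def
      proof (rule sum.cong)
        show "{v \<in> V. E u v} = V - {u}" using K u by auto
        show "\<And>x. x \<in> V - {u} \<Longrightarrow> exp_edge_betweenness V E lam u x = lam"
          using K_eb[OF K fin] u by auto
      qed
      also have "\<dots> = (real (card V) - 1) * lam" using fin u npos
        by (simp add: card_Diff_singleton of_nat_diff)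
      finally show ?thesis .
    qed
    have "exp_betweenness V E lam ` V = {(real (card V) - 1) * lam}"
      using all ne by auto
    then have "?m = (real (card V) - 1) * lam" by (simp add: min_exp_betweenness_def)
    with all show "?m = (real (card V) - 1) * lam
         \<and> (\<forall>u\<in>V. exp_betweenness V E lam u = (real (card V) - 1) * lam)" by blast
  qed
qed

end
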